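(* Fix $m\ge 2$ and consider the game for SumLoss with top-1 feedback and binary relevance, as in the context. Let $\sigma_i,\sigma_j$ be two learner actions such that there is exactly one pair of objects $\{a,b\}$ whose positions differ in $\sigma_i$ and $\sigma_j$, with $a$ placed immediately before $b$ in $\sigma_i$ (i.e. $\sigma_i(b)=\sigma_i(a)+1$) and $b$ placed immediately before $a$ in $\sigma_j$ (i.e. $\sigma_j(a)=\sigma_j(b)+1$). Then $\sigma_i$ and $\sigma_j$ are neighboring actions.
   Context: Objects are $\{1,\dots,m\}$. Learner actions are the permutations $\sigma_1,\dots,\sigma_{m!}$ of $[m]$ ($\sigma(i)$ = rank of object $i$); adversary actions are the relevance vectors $r_1,\dots,r_{2^m}$ enumerating $\{0,1\}^m$. The loss matrix $L\in\mathbb{R}^{m!\times 2^m}$ has $L_{i,j}=\sum_{k=1}^m\sigma_i(k)r_j(k)$, with rows $\ell_i$. Let $\Delta=\{p\in\mathbb{R}^{2^m}:p_i\ge0,\sum_ip_i=1\}$ and $C_i=\{p\in\Delta:\ell_i\cdot p\le\ell_k\cdot p\ \forall k\}$. Action $i$ is Pareto-optimal if $C_i$ is non-empty and $(2^m-1)$-dimensional. Two Pareto-optimal actions $i,j$ are neighboring actions if $C_i\cap C_j$ is a $(2^m-2)$-dimensional polytope. *)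

theory Defs
  imports "HOL-Analysis.Analysis"
begin

text \<open>Objects are the elements of a finite type 'n (with m = CARD('n)).
  A learner action is a ranking sigma : 'n -> {1..m} that is a bijection
  (sigma k = rank of object k).  Adversary actions are relevance vectors
  r : 'n -> bool, i.e. elements of {0,1}^m; there are 2^m of them.
  Mixed adversary strategies are vectors p in real^('n => bool).\<close>

definition is_perm :: "('n::finite \<Rightarrow> nat) \<Rightarrow> bool" where
  "is_perm \<sigma> \<longleftrightarrow> bij_betw \<sigma> UNIV {1..CARD('n)}"

definition sumloss :: "('n::finite \<Rightarrow> nat) \<Rightarrow> ('n \<Rightarrow> bool) \<Rightarrow> real" where
  "sumloss \<sigma> r = (\<Sum>k\<in>UNIV. real (\<sigma> k) * (if r k then 1 else 0))"

definition exp_loss :: "('n::finite \<Rightarrow> nat) \<Rightarrow> real ^ ('n \<Rightarrow> bool) \<Rightarrow> real" where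
  "exp_loss \<sigma> p = (\<Sum>r\<in>UNIV. sumloss \<sigma> r * p $ r)"

definition prob_simplex :: "(real ^ ('n::finite \<Rightarrow> bool)) set" where
  "prob_simplex = {p. (\<forall>r. 0 \<le> p $ r) \<and> (\<Sum>r\<in>UNIV. p $ r) = 1}"

definition cell :: "('n::finite \<Rightarrow> nat) \<Rightarrow> (real ^ ('n \<Rightarrow> bool)) set" where
  "cell \<sigma> = {p \<in> prob_simplex. \<forall>\<tau>. is_perm \<tau> \<longrightarrow> exp_loss \<sigma> p \<le> exp_loss \<tau> p}"

definition pareto_optimal :: "('n::finite \<Rightarrow> nat) \<Rightarrow> bool" where
  "pareto_optimal \<sigma> \<longleftrightarrow> is_perm \<sigma> \<and> cell \<sigma> \<noteq> {} \<and>
     aff_dim (cell \<sigma>) = int CARD('n \<Rightarrow> bool) - 1"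

definition neighboring :: "('n::finite \<Rightarrow> nat) \<Rightarrow> ('n \<Rightarrow> nat) \<Rightarrow> bool" where
  "neighboring \<sigma> \<tau> \<longleftrightarrow> pareto_optimal \<sigma> \<and> pareto_optimal \<tau> \<and>
     polytope (cell \<sigma> \<inter> cell \<tau>) \<and>
     aff_dim (cell \<sigma> \<inter> cell \<tau>) = int CARD('n \<Rightarrow> bool) - 2"

end

theory Submission
  imports Defs
begin

definition Q :: "'n::finite \<Rightarrow> real ^ ('n \<Rightarrow> bool) \<Rightarrow> real" where
  "Q k p = (\<Sum>r\<in>UNIV. p $ r * (if r k then 1 else 0))"

lemma exp_loss_Q: "exp_loss \<sigma> p = (\<Sum>k\<in>UNIV. real (\<sigma> k) * Q k p)"
proof -
  have "exp_loss \<sigma> p = (\<Sum>r\<in>UNIV. \<Sum>k\<in>UNIV. real (\<sigma> k) * (if r k then 1 else 0) * p $ r)"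
    unfolding exp_loss_def sumloss_def by (simp add: sum_distrib_right)
  also have "\<dots> = (\<Sum>k\<in>UNIV. \<Sum>r\<in>UNIV. real (\<sigma> k) * (if r k then 1 else 0) * p $ r)"
    by (rule sum.swap)
  also have "\<dots> = (\<Sum>k\<in>UNIV. real (\<sigma> k) * Q k p)"
    unfolding Q_def by (simp add: sum_distrib_left mult_ac)
  finally show ?thesis .
qed

lemma Q_inner: "Q k p = (\<chi> r. if r k then 1 else 0) \<bullet> p"
  unfolding Q_def inner_vec_def by (simp add: mult.commute)

lemma sum_exchange:
  fixes q :: "'a \<Rightarrow> real"
  assumes "finite A" "finite B" "card A = card B"
    and "\<And>x y. x \<in> A \<Longrightarrow> y \<notin> A \<Longrightarrow> q x \<le> q y"
  shows "sum q A \<le> sum q B"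
proof -
  have cA: "card (A - B) = card (B - A)"
    using assms(1-3) card_Diff_subset_Int[of A B] card_Diff_subset_Int[of B A] by (simp add: Int_commute)
  have sA: "sum q A = sum q (A \<inter> B) + sum q (A - B)"
    using sum.Int_Diff[OF assms(1), of q B] .
  have sB: "sum q B = sum q (A \<inter> B) + sum q (B - A)"
    using sum.Int_Diff[OF assms(2), of q A] by (simp add: Int_commute)
  show ?thesis
  proof (cases "A - B = {}")
    case True
    then have "B - A = {}" using cA assms(2) by (metis card_0_eq finite_Diff card.empty)
    with True sA sB show ?thesis by simp
  next
    case False
    define M where "M = Max (q ` (A - B))"
    have fin: "finite (q ` (A - B))" using assms(1) by auto
    have M1: "\<forall>x\<in>A - B. q x \<le> M" unfolding M_def using fin by auto
    obtain x0 where x0: "x0 \<in> A - B" "M = q x0"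
      unfolding M_def using Max_in[OF fin] False by auto
    have M2: "\<forall>y\<in>B - A. M \<le> q y" using x0 assms(4) by auto
    have "sum q (A - B) \<le> real (card (A - B)) * M" using sum_bounded_above[of "A - B" q M] M1 by auto
    also have "\<dots> \<le> sum q (B - A)" using sum_bounded_below[of "B - A" M q] M2 cA by auto
    finally show ?thesis using sA sB by simp
  qed
qed


lemma perm_range: "is_perm \<sigma> \<Longrightarrow> 1 \<le> \<sigma> k \<and> \<sigma> (k::'n::finite) \<le> CARD('n)"
  unfolding is_perm_def bij_betw_def by auto

lemma real_as_sum: "1 \<le> s \<Longrightarrow> s \<le> m \<Longrightarrow> real s = (\<Sum>t\<in>{1..m}. if t \<le> s then 1 else 0)"
proof -
  assume "1 \<le> s" "s \<le> m"
  then have e: "{t\<in>{1..m}. t \<le> s} = {1..s}" by auto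
  have "(\<Sum>t\<in>{1..m}. if t \<le> s then 1 else 0) = (\<Sum>t\<in>{t\<in>{1..m}. t \<le> s}. (1::real))"
    by (rule sum.inter_filter[symmetric]) simp
  also have "\<dots> = real s" unfolding e by simp
  finally show ?thesis by simp
qed

lemma layer:
  fixes q :: "'n::finite \<Rightarrow> real"
  assumes "is_perm \<sigma>"
  shows "(\<Sum>k\<in>UNIV. real (\<sigma> k) * q k) = (\<Sum>t\<in>{1..CARD('n)}. sum q {k. t \<le> \<sigma> k})"
proof -
  have step: "real (\<sigma> k) * q k = (\<Sum>t\<in>{1..CARD('n)}. (if t \<le> \<sigma> k then q k else 0))" for k
  proof -
    have pr: "1 \<le> \<sigma> k" "\<sigma> k \<le> CARD('n)" using perm_range[OF assms, of k] by simp_all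
    have r: "real (\<sigma> k) = (\<Sum>t\<in>{1..CARD('n)}. if t \<le> \<sigma> k then 1 else 0)"
      by (rule real_as_sum[OF pr])
    have "real (\<sigma> k) * q k = (\<Sum>t\<in>{1..CARD('n)}. (if t \<le> \<sigma> k then 1 else 0) * q k)"
      unfolding r by (rule sum_distrib_right)
    also have "\<dots> = (\<Sum>t\<in>{1..CARD('n)}. (if t \<le> \<sigma> k then q k else 0))"
      by (rule sum.cong[OF refl]) simp
    finally show ?thesis .
  qed
  have "(\<Sum>k\<in>UNIV. real (\<sigma> k) * q k) = (\<Sum>k\<in>UNIV. \<Sum>t\<in>{1..CARD('n)}. (if t \<le> \<sigma> k then q k else 0))"
    by (rule sum.cong[OF refl]) (rule step)
  also have "\<dots> = (\<Sum>t\<in>{1..CARD('n)}. \<Sum>k\<in>UNIV. (if t \<le> \<sigma> k then q k else 0))"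
    by (rule sum.swap)
  also have "\<dots> = (\<Sum>t\<in>{1..CARD('n)}. sum q {k. t \<le> \<sigma> k})"
    by (rule sum.cong[OF refl]) (subst sum.inter_filter[symmetric], simp_all)
  finally show ?thesis .
qed

lemma card_layer:
  assumes "is_perm (\<sigma>::'n::finite \<Rightarrow> nat)"
  shows "card {k. t \<le> \<sigma> k} = card {x\<in>{1..CARD('n)}. t \<le> x}"
proof -
  have bij: "bij_betw \<sigma> UNIV {1..CARD('n)}" using assms unfolding is_perm_def .
  then have inj: "inj \<sigma>" and im: "\<sigma> ` UNIV = {1..CARD('n)}" unfolding bij_betw_def by simp_all
  have "card (\<sigma> ` {k. t \<le> \<sigma> k}) = card {k. t \<le> \<sigma> k}"
    by (rule card_image[OF inj_on_subset[OF inj subset_UNIV]])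
  moreover have "\<sigma> ` {k. t \<le> \<sigma> k} = {x\<in>{1..CARD('n)}. t \<le> x}"
  proof
    show "\<sigma> ` {k. t \<le> \<sigma> k} \<subseteq> {x\<in>{1..CARD('n)}. t \<le> x}" using im by blast
    show "{x\<in>{1..CARD('n)}. t \<le> x} \<subseteq> \<sigma> ` {k. t \<le> \<sigma> k}"
    proof
      fix x assume x: "x \<in> {x\<in>{1..CARD('n)}. t \<le> x}"
      then have "x \<in> \<sigma> ` UNIV" using im by simp
      then obtain k where "x = \<sigma> k" by blast
      then show "x \<in> \<sigma> ` {k. t \<le> \<sigma> k}" using x by simp
    qed
  qed
  ultimately show ?thesis by simp
qed

lemma rearr:
  fixes q :: "'n::finite \<Rightarrow> real"
  assumes "is_perm \<sigma>" "is_perm \<tau>" "\<And>k l. \<sigma> k < \<sigma> l \<Longrightarrow> q l \<le> q k"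
  shows "(\<Sum>k\<in>UNIV. real (\<sigma> k) * q k) \<le> (\<Sum>k\<in>UNIV. real (\<tau> k) * q k)"
  unfolding layer[OF assms(1)] layer[OF assms(2)]
proof (rule sum_mono)
  fix t assume "t \<in> {1..CARD('n)}"
  show "sum q {k. t \<le> \<sigma> k} \<le> sum q {k. t \<le> \<tau> k}"
  proof (rule sum_exchange)
    show "finite {k. t \<le> \<sigma> k}" by simp
    show "finite {k. t \<le> \<tau> k}" by simp
    show "card {k. t \<le> \<sigma> k} = card {k. t \<le> \<tau> k}"
      unfolding card_layer[OF assms(1)] card_layer[OF assms(2)] ..
    fix x y assume "x \<in> {k. t \<le> \<sigma> k}" "y \<notin> {k. t \<le> \<sigma> k}"
    then have "\<sigma> y < \<sigma> x" by simp
    then show "q x \<le> q y" by (rule assms(3))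
  qed
qed

lemma cell_suff:
  fixes \<sigma> :: "'n::finite \<Rightarrow> nat"
  assumes "p \<in> prob_simplex" "is_perm \<sigma>" "\<And>k l. \<sigma> k < \<sigma> l \<Longrightarrow> Q l p \<le> Q k p"
  shows "p \<in> cell \<sigma>"
  unfolding cell_def
proof (intro CollectI conjI allI impI)
  show "p \<in> prob_simplex" by (fact assms(1))
  fix \<tau> :: "'n \<Rightarrow> nat" assume "is_perm \<tau>"
  then show "exp_loss \<sigma> p \<le> exp_loss \<tau> p"
    unfolding exp_loss_Q using rearr[of \<sigma> \<tau> "\<lambda>k. Q k p"] assms(2,3) by blast
qed

definition swp :: "'n \<Rightarrow> 'n \<Rightarrow> ('n \<Rightarrow> bool) \<Rightarrow> ('n \<Rightarrow> bool)" where
  "swp k l r = r(k := r l, l := r k)"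

lemma swp_swp: "swp k l (swp k l r) = r"
  unfolding swp_def by (auto simp: fun_eq_iff)

lemma swp_l: "swp k l r l = r k" unfolding swp_def by auto
lemma swp_k: "swp k l r k = r l" unfolding swp_def by auto
lemma swp_other: "j \<noteq> k \<Longrightarrow> j \<noteq> l \<Longrightarrow> swp k l r j = r j" unfolding swp_def by auto

lemma sum_swp:
  fixes G :: "('n::finite \<Rightarrow> bool) \<Rightarrow> real"
  shows "(\<Sum>r\<in>UNIV. G r * (if r l then 1 else 0)) = (\<Sum>r\<in>UNIV. G (swp k l r) * (if r k then 1 else 0))"
  by (rule sum.reindex_bij_witness[where i="swp k l" and j="swp k l"]) (auto simp: swp_swp swp_l swp_k)

lemma two_point_sum:
  fixes f :: "'n::finite \<Rightarrow> real"
  assumes "k \<noteq> l" "\<And>j. j \<noteq> k \<Longrightarrow> j \<noteq> l \<Longrightarrow> f j = 0"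
  shows "(\<Sum>j\<in>UNIV. f j) = f k + f l"
proof -
  have "(\<Sum>j\<in>UNIV. f j) = (\<Sum>j\<in>{k,l}. f j)"
    by (rule sum.mono_neutral_right) (use assms in auto)
  then show ?thesis using assms by simp
qed

definition gw :: "('n::finite \<Rightarrow> real) \<Rightarrow> ('n \<Rightarrow> bool) \<Rightarrow> real" where
  "gw w r = 1 + (\<Sum>j\<in>UNIV. if r j then w j else 0)"

lemma gw_diff:
  assumes "k \<noteq> l"
  shows "gw w r - gw w (swp k l r) = ((if r k then 1 else 0) - (if r l then 1 else 0)) * (w k - w l)"
proof -
  have "gw w r - gw w (swp k l r) = (\<Sum>j\<in>UNIV. (if r j then w j else 0) - (if swp k l r j then w j else 0))"
    unfolding gw_def by (simp add: sum_subtractf)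
  also have "\<dots> = ((if r k then w k else 0) - (if swp k l r k then w k else 0)) +
     ((if r l then w l else 0) - (if swp k l r l then w l else 0))"
    by (rule two_point_sum) (use assms in \<open>auto simp: swp_other\<close>)
  also have "\<dots> = ((if r k then 1 else 0) - (if r l then 1 else 0)) * (w k - w l)"
    using assms by (auto simp: swp_k swp_l)
  finally show ?thesis .
qed

lemma Q_diff_gw:
  fixes w :: "'n::finite \<Rightarrow> real"
  assumes "k \<noteq> l"
  shows "Q k ((\<chi> r. gw w r)) - Q l ((\<chi> r. gw w r)) =
     (\<Sum>r\<in>UNIV. if r k \<and> \<not> r l then 1 else 0) * (w k - w l)"
proof -
  have "Q k ((\<chi> r. gw w r)) - Q l ((\<chi> r. gw w r)) =
     (\<Sum>r\<in>UNIV. gw w r * (if r k then 1 else 0)) - (\<Sum>r\<in>UNIV. gw w (swp k l r) * (if r k then 1 else 0))"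
    unfolding Q_def using sum_swp[of "gw w" l k] by simp
  also have "\<dots> = (\<Sum>r\<in>UNIV. (gw w r - gw w (swp k l r)) * (if r k then 1 else 0))"
    by (simp add: sum_subtractf left_diff_distrib)
  also have "\<dots> = (\<Sum>r\<in>UNIV. (if r k \<and> \<not> r l then 1 else 0) * (w k - w l))"
    by (rule sum.cong) (auto simp: gw_diff[OF assms])
  also have "\<dots> = (\<Sum>r\<in>UNIV. if r k \<and> \<not> r l then 1 else 0) * (w k - w l)"
    by (simp add: sum_distrib_right)
  finally show ?thesis .
qed

lemma count_pos:
  assumes "k \<noteq> (l::'n::finite)"
  shows "(\<Sum>r\<in>UNIV. if r k \<and> \<not> r l then 1 else 0::real) > 0"
proof -
  have "(1::real) \<le> (\<Sum>r\<in>UNIV. if r k \<and> \<not> r l then 1 else 0::real)"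
    using member_le_sum[of "\<lambda>x. x = k" UNIV "\<lambda>r. if r k \<and> \<not> r l then 1 else 0::real"] assms by auto
  then show ?thesis by simp
qed

lemma gw_pos: "(\<And>j. 0 \<le> w j) \<Longrightarrow> 1 \<le> gw w r"
  unfolding gw_def by (auto intro!: sum_nonneg)

lemma point_exists:
  fixes w :: "'n::finite \<Rightarrow> real"
  assumes "\<And>j. 0 \<le> w j"
  shows "\<exists>p \<in> prob_simplex. (\<forall>r. 0 < p $ r) \<and>
     (\<forall>k l. k \<noteq> l \<longrightarrow> (\<exists>c>0. Q k p - Q l p = c * (w k - w l)))"
proof -
  define S where "S = (\<Sum>r\<in>UNIV. gw w r)"
  have g1: "1 \<le> gw w r" for r using gw_pos[OF assms] .
  have "0 < (\<Sum>r\<in>(UNIV::('n\<Rightarrow>bool) set). gw w r)"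
    by (rule sum_pos) (use g1 in \<open>auto intro: less_le_trans[OF zero_less_one]\<close>)
  then have S: "S > 0" unfolding S_def .
  define p where "p = (inverse S) *\<^sub>R (\<chi> r. gw w r)"
  have pr: "p $ r = inverse S * gw w r" for r unfolding p_def by simp
  have Qp: "Q k p = inverse S * Q k (\<chi> r. gw w r)" for k
    unfolding Q_def pr by (simp add: sum_distrib_left mult_ac)
  have pos: "\<forall>r. 0 < p $ r" unfolding pr using S g1
    by (metis inverse_positive_iff_positive less_le_trans mult_pos_pos zero_less_one)
  have "(\<Sum>r\<in>UNIV. p $ r) = inverse S * S" unfolding pr S_def by (simp add: sum_distrib_left)
  then have "(\<Sum>r\<in>UNIV. p $ r) = 1" using S by simp
  then have sp: "p \<in> prob_simplex" unfolding prob_simplex_def using pos less_imp_le by auto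
  have diffs: "\<forall>k l. k \<noteq> l \<longrightarrow> (\<exists>c>0. Q k p - Q l p = c * (w k - w l))"
  proof (intro allI impI)
    fix k l :: 'n assume kl: "k \<noteq> l"
    have "Q k p - Q l p = inverse S * (Q k (\<chi> r. gw w r) - Q l (\<chi> r. gw w r))"
      unfolding Qp by (simp add: right_diff_distrib)
    also have "\<dots> = (inverse S * (\<Sum>r\<in>UNIV. if r k \<and> \<not> r l then 1 else 0)) * (w k - w l)"
      unfolding Q_diff_gw[OF kl] by simp
    finally show "\<exists>c>0. Q k p - Q l p = c * (w k - w l)"
      using S count_pos[OF kl] by (intro exI[of _ "inverse S * (\<Sum>r\<in>UNIV. if r k \<and> \<not> r l then 1 else 0)"]) simp
  qed
  show ?thesis
  proof (rule bexI[where x=p])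
    show "p \<in> prob_simplex" by (fact sp)
    show "(\<forall>r. 0 < p $ r) \<and> (\<forall>k l. k \<noteq> l \<longrightarrow> (\<exists>c>0. Q k p - Q l p = c * (w k - w l)))"
      using pos diffs by (rule conjI)
  qed
qed


definition one :: "real ^ ('n::finite \<Rightarrow> bool)" where "one = (\<chi> r. 1)"
definition qv :: "'n::finite \<Rightarrow> real ^ ('n \<Rightarrow> bool)" where "qv k = (\<chi> r. if r k then 1 else 0)"

lemma Q_qv: "Q k p = qv k \<bullet> p" unfolding Q_inner qv_def ..

lemma one_inner: "one \<bullet> p = (\<Sum>r\<in>UNIV. p $ r)" unfolding one_def inner_vec_def by simp

lemma one_nz: "(one::real^('n::finite\<Rightarrow>bool)) \<noteq> 0"
  by (simp add: one_def vec_eq_iff)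

definition Hs :: "(real ^ ('n::finite \<Rightarrow> bool)) set" where "Hs = {p. one \<bullet> p = 1}"

lemma aff_dim_Hs: "aff_dim (Hs :: (real ^ ('n::finite \<Rightarrow> bool)) set) = int CARD('n \<Rightarrow> bool) - 1"
  unfolding Hs_def using aff_dim_hyperplane[OF one_nz] by simp

lemma simplex_Hs: "prob_simplex \<subseteq> Hs" unfolding prob_simplex_def Hs_def one_inner by auto

lemma cell_Hs: "cell \<sigma> \<subseteq> Hs" unfolding cell_def using simplex_Hs by auto

lemma open_Q_less: "open {p. Q l p < Q k p}"
  unfolding Q_qv by (intro open_Collect_less continuous_intros)


lemma open_all: "(\<And>k. open {p. P k p}) \<Longrightarrow> open {p. \<forall>k::'n::finite. P k p}"
proof -
  assume h: "\<And>k. open {p. P k p}"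
  have "{p. \<forall>k::'n. P k p} = (\<Inter>k. {p. P k p})" by auto
  then show ?thesis using h by (simp add: open_INT)
qed

lemma open_U: fixes R :: "'n::finite \<Rightarrow> 'n \<Rightarrow> bool" shows "open {p. (\<forall>r. 0 < p $ r) \<and> (\<forall>k l. R k l \<longrightarrow> Q l p < Q k p)}"
proof -
  have o1: "open {p::real^('n\<Rightarrow>bool). \<forall>r. 0 < p $ r}" by (intro open_all open_halfspace_component_gt_cart)
  have "open {p. R k l \<longrightarrow> Q l p < Q k p}" for k l
    by (cases "R k l") (simp_all add: open_Q_less)
  then have o2: "open {p. \<forall>k l. R k l \<longrightarrow> Q l p < Q k p}"
    by (intro open_all) 
  show ?thesis using open_Int[OF o1 o2] by (simp add: Collect_conj_eq)
qed

lemma Hs_pos_simplex: "p \<in> Hs \<Longrightarrow> (\<forall>r. 0 < p $ r) \<Longrightarrow> p \<in> prob_simplex"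
  unfolding Hs_def prob_simplex_def one_inner by (auto simp: less_imp_le)

lemma pareto:
  fixes \<sigma> :: "'n::finite \<Rightarrow> nat"
  assumes "is_perm \<sigma>"
  shows "pareto_optimal \<sigma>"
proof -
  define U where "U = {p. (\<forall>r. 0 < p $ r) \<and> (\<forall>k l. \<sigma> k < \<sigma> l \<longrightarrow> Q l p < Q k p)}"
  have oU: "open U" unfolding U_def by (rule open_U)
  have sub: "Hs \<inter> U \<subseteq> cell \<sigma>"
  proof
    fix p assume p: "p \<in> Hs \<inter> U"
    then have "p \<in> prob_simplex" using Hs_pos_simplex[of p] unfolding U_def by simp
    moreover have "\<And>k l. \<sigma> k < \<sigma> l \<Longrightarrow> Q l p \<le> Q k p" using p unfolding U_def by (simp add: less_imp_le)
    ultimately show "p \<in> cell \<sigma>" using cell_suff assms by blast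
  qed
  define w where "w j = real CARD('n) - real (\<sigma> j)" for j
  have w0: "0 \<le> w j" for j unfolding w_def using perm_range[OF assms, of j] by simp
  obtain p where p1: "p \<in> prob_simplex" and p23: "(\<forall>r. 0 < p $ r) \<and>
    (\<forall>k l. k \<noteq> l \<longrightarrow> (\<exists>c>0. Q k p - Q l p = c * (w k - w l)))"
    using point_exists[of w, OF w0] by (elim bexE) (rule that)
  note p = p1 conjunct1[OF p23] conjunct2[OF p23]
  have strict: "\<forall>k l. \<sigma> k < \<sigma> l \<longrightarrow> Q l p < Q k p"
  proof (intro allI impI)
    fix k l assume kl: "\<sigma> k < \<sigma> l"
    then have "k \<noteq> l" by auto
    then obtain c where "c > 0" "Q k p - Q l p = c * (w k - w l)" using p(3) by blast
    moreover have "w k - w l > 0" unfolding w_def using kl by simp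
    ultimately have "Q k p - Q l p > 0" by simp
    then show "Q l p < Q k p" by simp
  qed
  have "p \<in> U" unfolding U_def using p(2) strict by simp
  then have ne: "Hs \<inter> U \<noteq> {}" using p(1) simplex_Hs by auto
  have "aff_dim (Hs \<inter> U) = aff_dim (Hs :: (real ^ ('n \<Rightarrow> bool)) set)"
    by (rule aff_dim_convex_Int_open[OF _ oU ne]) (simp add: Hs_def convex_hyperplane)
  then have d1: "int CARD('n \<Rightarrow> bool) - 1 \<le> aff_dim (cell \<sigma>)"
    using aff_dim_subset[OF sub] aff_dim_Hs[where 'n='n] by linarith
  have d2: "aff_dim (cell \<sigma>) \<le> int CARD('n \<Rightarrow> bool) - 1"
    using aff_dim_subset[OF cell_Hs[of \<sigma>]] aff_dim_Hs[where 'n='n] by linarith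
  have "cell \<sigma> \<noteq> {}" using ne sub by blast
  then show ?thesis unfolding pareto_optimal_def using assms d1 d2 by (intro conjI) auto
qed


lemma finite_perms: "finite {\<tau>::'n::finite \<Rightarrow> nat. is_perm \<tau>}"
proof (rule finite_subset)
  show "{\<tau>::'n \<Rightarrow> nat. is_perm \<tau>} \<subseteq> PiE UNIV (\<lambda>_. {1..CARD('n)})"
    unfolding is_perm_def bij_betw_def PiE_iff by auto
  show "finite (PiE (UNIV::'n set) (\<lambda>_. {1..CARD('n)}))" by (rule finite_PiE) simp_all
qed

lemma el_inner: "exp_loss \<sigma> p - exp_loss \<tau> p = (\<chi> r. sumloss \<sigma> r - sumloss \<tau> r) \<bullet> p"
  unfolding exp_loss_def inner_vec_def by (simp add: sum_subtractf left_diff_distrib)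

lemma simplex_eq: "prob_simplex = Hs \<inter> \<Inter> (range (\<lambda>r. {p. (- axis r 1) \<bullet> p \<le> 0}))"
  unfolding prob_simplex_def Hs_def one_inner by (auto simp: inner_axis')

lemma polyhedron_simplex: "polyhedron (prob_simplex :: (real ^ ('n::finite \<Rightarrow> bool)) set)"
  unfolding simplex_eq Hs_def
  by (intro polyhedron_Int polyhedron_hyperplane polyhedron_Inter) (auto intro: polyhedron_halfspace_le polyhedron_halfspace_ge)

lemma cell_eq: "cell \<sigma> = prob_simplex \<inter> \<Inter> ((\<lambda>\<tau>. {p. (\<chi> r. sumloss \<sigma> r - sumloss \<tau> r) \<bullet> p \<le> 0}) ` {\<tau>. is_perm \<tau>})"
proof -
  have "exp_loss \<sigma> p \<le> exp_loss \<tau> p \<longleftrightarrow> (\<chi> r. sumloss \<sigma> r - sumloss \<tau> r) \<bullet> p \<le> 0" for p \<tau>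
    using el_inner[of \<sigma> p \<tau>] by linarith
  then show ?thesis unfolding cell_def by auto
qed

lemma polyhedron_cell: "polyhedron (cell (\<sigma>::'n::finite \<Rightarrow> nat))"
  unfolding cell_eq
  by (intro polyhedron_Int polyhedron_simplex polyhedron_Inter finite_imageI finite_perms)
     (auto intro: polyhedron_halfspace_le)

lemma bounded_simplex: "bounded (prob_simplex :: (real ^ ('n::finite \<Rightarrow> bool)) set)"
proof (rule bounded_subset[OF bounded_cball[of 0 1]])
  show "(prob_simplex :: (real ^ ('n \<Rightarrow> bool)) set) \<subseteq> cball 0 1"
  proof
    fix p :: "real ^ ('n \<Rightarrow> bool)" assume p: "p \<in> prob_simplex"
    have "norm p \<le> (\<Sum>r\<in>UNIV. \<bar>p $ r\<bar>)" by (rule norm_le_l1_cart)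
    also have "\<dots> = (\<Sum>r\<in>UNIV. p $ r)" using p unfolding prob_simplex_def by simp
    also have "\<dots> = 1" using p unfolding prob_simplex_def by simp
    finally show "p \<in> cball 0 1" by simp
  qed
qed

lemma order_j:
  fixes \<sigma>i \<sigma>j :: "'n \<Rightarrow> nat"
  assumes ne: "\<And>x y. x \<noteq> y \<Longrightarrow> \<sigma>i x \<noteq> \<sigma>i y"
    and oth: "\<And>x. x \<noteq> a \<Longrightarrow> x \<noteq> b \<Longrightarrow> \<sigma>j x = \<sigma>i x"
    and h1: "\<sigma>i b = \<sigma>i a + 1" and h2: "\<sigma>j a = \<sigma>i b" and h3: "\<sigma>j b = \<sigma>i a" and ab: "a \<noteq> b"
    and lt: "\<sigma>j k < \<sigma>j l"
  shows "(k = b \<and> l = a) \<or> (\<sigma>i k < \<sigma>i l \<and> \<not> (k = a \<and> l = b))"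
  using ne[of k a] ne[of k b] ne[of l a] ne[of l b] oth[of k] oth[of l] h1 h2 h3 ab lt
  by (cases "k = a"; cases "k = b"; cases "l = a"; cases "l = b") auto

lemma order_w:
  fixes \<sigma>i :: "'n \<Rightarrow> nat"
  assumes ne: "\<And>x y. x \<noteq> y \<Longrightarrow> \<sigma>i x \<noteq> \<sigma>i y"
    and h1: "\<sigma>i b = \<sigma>i a + 1" and ab: "a \<noteq> b"
    and lt: "\<sigma>i k < \<sigma>i l" and nab: "\<not> (k = a \<and> l = b)"
  shows "\<sigma>i (if k = b then a else k) < \<sigma>i (if l = b then a else l)"
  using ne[of k a] ne[of k b] ne[of l a] ne[of l b] h1 ab lt nab
  by (cases "k = a"; cases "k = b"; cases "l = a"; cases "l = b") auto


theorem lemma2: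
  fixes \<sigma>i \<sigma>j :: "'n::finite \<Rightarrow> nat" and a b :: 'n
  assumes "CARD('n) \<ge> 2"
    and "is_perm \<sigma>i" and "is_perm \<sigma>j"
    and "a \<noteq> b"
    and "\<forall>k. k \<noteq> a \<and> k \<noteq> b \<longrightarrow> \<sigma>i k = \<sigma>j k"
    and "\<sigma>i b = \<sigma>i a + 1"
    and "\<sigma>j a = \<sigma>j b + 1"
  shows "neighboring \<sigma>i \<sigma>j"
proof -
  note pi = assms(2) and pj = assms(3) and ab = assms(4) and h1 = assms(6) and h1j = assms(7)
  have oth: "\<And>x. x \<noteq> a \<Longrightarrow> x \<noteq> b \<Longrightarrow> \<sigma>j x = \<sigma>i x" using assms(5) by auto
  have bi: "bij_betw \<sigma>i UNIV {1..CARD('n)}" using pi unfolding is_perm_def .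
  have bj: "bij_betw \<sigma>j UNIV {1..CARD('n)}" using pj unfolding is_perm_def .
  have ne: "\<And>x y. x \<noteq> y \<Longrightarrow> \<sigma>i x \<noteq> \<sigma>i y" using bi unfolding bij_betw_def inj_on_def by blast
  have nej: "\<And>x y. x \<noteq> y \<Longrightarrow> \<sigma>j x \<noteq> \<sigma>j y" using bj unfolding bij_betw_def inj_on_def by blast
  have inab: "\<sigma>j x \<in> {\<sigma>i a, \<sigma>i b}" if "x = a \<or> x = b" for x
  proof -
    have "\<sigma>j x \<in> \<sigma>i ` UNIV" using bi bj unfolding bij_betw_def by auto
    then obtain y where y: "\<sigma>j x = \<sigma>i y" by blast
    show ?thesis
    proof (cases "y = a \<or> y = b")
      case True then show ?thesis using y by auto
    next
      case False
      then have "\<sigma>j x = \<sigma>j y" using y oth[of y] by simp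
      then have "x = y" using nej by blast
      then show ?thesis using False that by simp
    qed
  qed
  have h3: "\<sigma>j b = \<sigma>i a" and h2: "\<sigma>j a = \<sigma>i b"
    using inab[of a] inab[of b] h1 h1j by auto
  have diff: "exp_loss \<sigma>i p - exp_loss \<sigma>j p = Q b p - Q a p" for p
  proof -
    have "exp_loss \<sigma>i p - exp_loss \<sigma>j p = (\<Sum>k\<in>UNIV. (real (\<sigma>i k) - real (\<sigma>j k)) * Q k p)"
      unfolding exp_loss_Q by (simp add: sum_subtractf left_diff_distrib)
    also have "\<dots> = (real (\<sigma>i a) - real (\<sigma>j a)) * Q a p + (real (\<sigma>i b) - real (\<sigma>j b)) * Q b p"
      by (rule two_point_sum[OF ab]) (simp add: oth)
    also have "\<dots> = Q b p - Q a p" using h1 h2 h3 by simp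
    finally show ?thesis .
  qed
  define dv where "dv = qv a - qv b"
  have dvp: "dv \<bullet> p = Q a p - Q b p" for p unfolding dv_def Q_qv by (simp add: inner_diff_left)
  define E where "E = {p. dv \<bullet> p = 0}"
  have sub_up: "cell \<sigma>i \<inter> cell \<sigma>j \<subseteq> Hs \<inter> E"
  proof
    fix p assume p: "p \<in> cell \<sigma>i \<inter> cell \<sigma>j"
    then have "exp_loss \<sigma>i p \<le> exp_loss \<sigma>j p" using pj unfolding cell_def by blast
    moreover have "exp_loss \<sigma>j p \<le> exp_loss \<sigma>i p" using p pi unfolding cell_def by blast
    ultimately have "Q a p = Q b p" using diff[of p] by linarith
    then have "p \<in> E" unfolding E_def dvp by simp
    moreover have "p \<in> Hs" using p cell_Hs by blast
    ultimately show "p \<in> Hs \<inter> E" by blast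
  qed
  define R where "R k l \<longleftrightarrow> \<sigma>i k < \<sigma>i l \<and> \<not> (k = a \<and> l = b)" for k l
  define U where "U = {p. (\<forall>r. 0 < p $ r) \<and> (\<forall>k l. R k l \<longrightarrow> Q l p < Q k p)}"
  have oU: "open U" unfolding U_def by (rule open_U)
  have sub_lo: "(Hs \<inter> E) \<inter> U \<subseteq> cell \<sigma>i \<inter> cell \<sigma>j"
  proof
    fix p assume p: "p \<in> (Hs \<inter> E) \<inter> U"
    have ps: "p \<in> prob_simplex" using p Hs_pos_simplex[of p] unfolding U_def by simp
    have eq: "Q a p = Q b p" using p unfolding E_def dvp by simp
    have st: "\<And>k l. R k l \<Longrightarrow> Q l p < Q k p" using p unfolding U_def by simp
    have "p \<in> cell \<sigma>i"
    proof (rule cell_suff[OF ps pi])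
      fix k l assume kl: "\<sigma>i k < \<sigma>i l"
      show "Q l p \<le> Q k p"
      proof (cases "k = a \<and> l = b")
        case True then show ?thesis using eq by simp
      next
        case False then have "R k l" unfolding R_def using kl by simp
        then show ?thesis using st less_imp_le by blast
      qed
    qed
    moreover have "p \<in> cell \<sigma>j"
    proof (rule cell_suff[OF ps pj])
      fix k l assume kl: "\<sigma>j k < \<sigma>j l"
      have "(k = b \<and> l = a) \<or> R k l"
        using order_j[OF ne oth h1 h2 h3 ab kl] unfolding R_def .
      then show "Q l p \<le> Q k p"
      proof
        assume "k = b \<and> l = a" then show ?thesis using eq by simp
      next
        assume "R k l" then show ?thesis using st less_imp_le by blast
      qed
    qed
    ultimately show "p \<in> cell \<sigma>i \<inter> cell \<sigma>j" by blast
  qed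
  define w where "w j = real CARD('n) - real (\<sigma>i (if j = b then a else j))" for j
  have w0: "0 \<le> w j" for j unfolding w_def using perm_range[OF pi, of "if j = b then a else j"] by simp
  obtain p where p1: "p \<in> prob_simplex" and p23: "(\<forall>r. 0 < p $ r) \<and>
    (\<forall>k l. k \<noteq> l \<longrightarrow> (\<exists>c>0. Q k p - Q l p = c * (w k - w l)))"
    using point_exists[of w, OF w0] by (elim bexE) (rule that)
  note p = p1 conjunct1[OF p23] conjunct2[OF p23]
  have strict: "\<forall>k l. R k l \<longrightarrow> Q l p < Q k p"
  proof (intro allI impI)
    fix k l assume kl: "R k l"
    then have "k \<noteq> l" unfolding R_def by auto
    then obtain c where c: "c > 0" "Q k p - Q l p = c * (w k - w l)" using p(3) by blast
    have "\<sigma>i (if k = b then a else k) < \<sigma>i (if l = b then a else l)"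
      using kl unfolding R_def using order_w[OF ne h1 ab] by blast
    then have "w k - w l > 0" unfolding w_def by simp
    with c have "Q k p - Q l p > 0" by simp
    then show "Q l p < Q k p" by simp
  qed
  have "p \<in> U" unfolding U_def using p(2) strict by simp
  moreover have "p \<in> Hs" using p(1) simplex_Hs by blast
  moreover have "p \<in> E"
  proof -
    obtain c where c: "c > 0" "Q a p - Q b p = c * (w a - w b)" using p(3) ab by blast
    have "w a = w b" unfolding w_def using ab by simp
    then have "Q a p = Q b p" using c by simp
    then show ?thesis unfolding E_def dvp by simp
  qed
  ultimately have neU: "(Hs \<inter> E) \<inter> U \<noteq> {}" by blast
  define \<delta> where "\<delta> = (axis (\<lambda>x. x = a) 1 :: real ^ ('n \<Rightarrow> bool))"
  have "one \<bullet> \<delta> = 1" unfolding \<delta>_def one_def by (simp add: inner_axis)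
  moreover have "dv \<bullet> \<delta> = 1" unfolding \<delta>_def dv_def qv_def using ab by (simp add: inner_axis inner_diff_left)
  ultimately have nsub: "\<not> Hs \<subseteq> {v. dv \<bullet> v = 0}" unfolding Hs_def by auto
  have "Hs \<inter> {v. dv \<bullet> v = 0} \<noteq> {}" using neU unfolding E_def by blast
  then have adHE: "aff_dim (Hs \<inter> E) = aff_dim (Hs :: (real ^ ('n \<Rightarrow> bool)) set) - 1"
    unfolding E_def using aff_dim_affine_Int_hyperplane[of Hs dv 0] nsub
    by (simp add: Hs_def affine_hyperplane)
  have "aff_dim ((Hs \<inter> E) \<inter> U) = aff_dim (Hs \<inter> E)"
    by (rule aff_dim_convex_Int_open[OF _ oU neU]) (simp add: Hs_def E_def convex_Int convex_hyperplane)
  then have d1: "int CARD('n \<Rightarrow> bool) - 2 \<le> aff_dim (cell \<sigma>i \<inter> cell \<sigma>j)"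
    using aff_dim_subset[OF sub_lo] adHE aff_dim_Hs[where 'n='n] by linarith
  have d2: "aff_dim (cell \<sigma>i \<inter> cell \<sigma>j) \<le> int CARD('n \<Rightarrow> bool) - 2"
    using aff_dim_subset[OF sub_up] adHE aff_dim_Hs[where 'n='n] by linarith
  have poly: "polytope (cell \<sigma>i \<inter> cell \<sigma>j)"
    unfolding polytope_eq_bounded_polyhedron
  proof
    show "polyhedron (cell \<sigma>i \<inter> cell \<sigma>j)" by (intro polyhedron_Int polyhedron_cell)
    have "cell \<sigma>i \<inter> cell \<sigma>j \<subseteq> prob_simplex" unfolding cell_def by blast
    then show "bounded (cell \<sigma>i \<inter> cell \<sigma>j)" using bounded_subset[OF bounded_simplex] by blast
  qed
  show ?thesis unfolding neighboring_def using pareto[OF pi] pareto[OF pj] poly d1 d2 by simp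
qed

end
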